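(* In the Data Revocation Game: (1) The profile $d_i^*=0$ for all $i\in\mathcal I$ is a Nash equilibrium if and only if $$\epsilon_i\ge\Big(\xi_i\ell_i+\theta_i\sum_{j\in\mathcal I,\,j\ne i}\ell_j^2\Big)^{-1}\quad\text{for all } i\in\mathcal I.$$ (2) The profile $d_i^*=d_i^{\max}$ for all $i\in\mathcal I$ is a Nash equilibrium if and only if $$\epsilon_i\le(\xi_i\ell_i)^{-1}-\sum_{j\in\mathcal I}d_j^{\max}\quad\text{for all } i\in\mathcal I.$$
   Context: Data Revocation Game: a finite set of users $\mathcal I=\{1,\dots,I\}$, $I\ge 2$. Each user $i$ has parameters $d_i^{\max}>0$, $\epsilon_i>0$, $\xi_i>0$, $\ell_i>0$, $\theta_i\ge 0$. Each user chooses $d_i\in[0,d_i^{\max}]$. Payoff $$U_i(d_i,\boldsymbol{d_{-i}})=\ln\Big(\sum_{j\in\mathcal I}d_j+\epsilon_i\Big)-\xi_i d_i\ell_i-\theta_i d_i\sum_{j\neq i}\Big(1-\frac{d_j}{d_j^{\max}}\Big)\ell_j^2 .$$ A Nash equilibrium is a profile $(d_i^* )$ with $d_i^*\in[0,d_i^{\max}]$ and $U_i(d_i^*,\boldsymbol{d_{-i}^*})\ge U_i(d_i,\boldsymbol{d_{-i}^*})$ for all $i$ and all $d_i\in[0,d_i^{\max}]$. *)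

theory Defs
  imports Complex_Main
begin

definition payoff ::
  "'a set \<Rightarrow> ('a \<Rightarrow> real) \<Rightarrow> ('a \<Rightarrow> real) \<Rightarrow> ('a \<Rightarrow> real) \<Rightarrow> ('a \<Rightarrow> real)
   \<Rightarrow> ('a \<Rightarrow> real) \<Rightarrow> ('a \<Rightarrow> real) \<Rightarrow> 'a \<Rightarrow> real" where
  "payoff I dmax eps xi l theta d i =
     ln ((\<Sum>j\<in>I. d j) + eps i) - xi i * d i * l i
     - theta i * d i * (\<Sum>j\<in>I - {i}. (1 - d j / dmax j) * (l j)\<^sup>2)"

definition nash_eq ::
  "'a set \<Rightarrow> ('a \<Rightarrow> real) \<Rightarrow> ('a \<Rightarrow> real) \<Rightarrow> ('a \<Rightarrow> real) \<Rightarrow> ('a \<Rightarrow> real)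
   \<Rightarrow> ('a \<Rightarrow> real) \<Rightarrow> ('a \<Rightarrow> real) \<Rightarrow> bool" where
  "nash_eq I dmax eps xi l theta d \<longleftrightarrow>
     (\<forall>i\<in>I. 0 \<le> d i \<and> d i \<le> dmax i) \<and>
     (\<forall>i\<in>I. \<forall>x. 0 \<le> x \<and> x \<le> dmax i \<longrightarrow>
        payoff I dmax eps xi l theta d i \<ge> payoff I dmax eps xi l theta (d(i := x)) i)"

end

theory Submission
  imports Defs
begin

lemma ln_up: "(y::real) > 0 \<Longrightarrow> y0 > 0 \<Longrightarrow> ln y \<le> ln y0 + (y - y0) / y0"
proof -
  assume a: "y > 0" "y0 > 0"
  have "ln (y / y0) \<le> y / y0 - 1" using a by (intro ln_le_minus_one) simp
  thus ?thesis using a by (simp add: ln_div diff_divide_distrib)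
qed

lemma ln_lo: "(y::real) > 0 \<Longrightarrow> y0 > 0 \<Longrightarrow> ln y \<ge> ln y0 + (y - y0) / y"
proof -
  assume a: "y > 0" "y0 > 0"
  have "ln (y0 / y) \<le> y0 / y - 1" using a by (intro ln_le_minus_one) simp
  thus ?thesis using a by (simp add: ln_div diff_divide_distrib)
qed

lemma pay0:
  assumes "finite I" "i \<in> I"
  shows "payoff I dmax eps xi l theta ((\<lambda>i. 0)(i := x)) i
      = ln (x + eps i) - (xi i * l i + theta i * (\<Sum>j\<in>I - {i}. (l j)\<^sup>2)) * x"
proof -
  have s: "(\<Sum>j\<in>I. ((\<lambda>i. 0)(i := x)) j) = x"
    using assms by (simp add: sum.delta)
  have t: "(\<Sum>j\<in>I - {i}. (1 - ((\<lambda>i. 0)(i := x)) j / dmax j) * (l j)\<^sup>2) = (\<Sum>j\<in>I - {i}. (l j)\<^sup>2)"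
    by (rule sum.cong) auto
  show ?thesis unfolding payoff_def s t by (simp add: algebra_simps)
qed

lemma paymax:
  assumes "finite I" "i \<in> I" "\<And>j. j \<in> I \<Longrightarrow> dmax j > 0"
  shows "payoff I dmax eps xi l theta (dmax(i := x)) i
      = ln ((\<Sum>j\<in>I. dmax j) - dmax i + x + eps i) - xi i * l i * x"
proof -
  have s: "(\<Sum>j\<in>I. (dmax(i := x)) j) = (\<Sum>j\<in>I. dmax j) - dmax i + x"
  proof -
    have "(\<Sum>j\<in>I. (dmax(i := x)) j) = (dmax(i := x)) i + (\<Sum>j\<in>I - {i}. (dmax(i := x)) j)"
      using assms(1,2) by (rule sum.remove)
    also have "(\<Sum>j\<in>I - {i}. (dmax(i := x)) j) = (\<Sum>j\<in>I - {i}. dmax j)"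
      by (rule sum.cong) auto
    also have "(\<Sum>j\<in>I - {i}. dmax j) = (\<Sum>j\<in>I. dmax j) - dmax i"
      using assms(1,2) by (simp add: sum_diff1)
    finally show ?thesis by simp
  qed
  have t: "(\<Sum>j\<in>I - {i}. (1 - (dmax(i := x)) j / dmax j) * (l j)\<^sup>2) = 0"
    using assms(3) by (intro sum.neutral) (auto simp: less_imp_neq[symmetric])
  show ?thesis unfolding payoff_def s t by simp
qed

theorem proposition2:
  fixes I :: "'a set"
    and dmax eps xi l theta :: "'a \<Rightarrow> real"
  assumes "finite I" and "card I \<ge> 2"
    and "\<And>i. i \<in> I \<Longrightarrow> dmax i > 0"
    and "\<And>i. i \<in> I \<Longrightarrow> eps i > 0"
    and "\<And>i. i \<in> I \<Longrightarrow> xi i > 0"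
    and "\<And>i. i \<in> I \<Longrightarrow> l i > 0"
    and "\<And>i. i \<in> I \<Longrightarrow> theta i \<ge> 0"
  shows "(nash_eq I dmax eps xi l theta (\<lambda>i. 0) \<longleftrightarrow>
            (\<forall>i\<in>I. eps i \<ge> 1 / (xi i * l i + theta i * (\<Sum>j\<in>I - {i}. (l j)\<^sup>2))))
       \<and> (nash_eq I dmax eps xi l theta dmax \<longleftrightarrow>
            (\<forall>i\<in>I. eps i \<le> 1 / (xi i * l i) - (\<Sum>j\<in>I. dmax j)))"
proof
  define c where "c i = xi i * l i + theta i * (\<Sum>j\<in>I - {i}. (l j)\<^sup>2)" for i
  have cpos: "c i > 0" if "i \<in> I" for i
  proof -
    have "theta i * (\<Sum>j\<in>I - {i}. (l j)\<^sup>2) \<ge> 0"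
      using assms(7)[OF that] by (simp add: sum_nonneg)
    moreover have "xi i * l i > 0" using assms(5,6)[OF that] by simp
    ultimately show ?thesis unfolding c_def by linarith
  qed
  have p0: "payoff I dmax eps xi l theta ((\<lambda>i. 0)(i := x)) i = ln (x + eps i) - c i * x"
    if "i \<in> I" for i x using pay0[OF assms(1) that] unfolding c_def by simp
  have p00: "payoff I dmax eps xi l theta (\<lambda>i. 0) i = ln (eps i)" if "i \<in> I" for i
  proof -
    have "(\<lambda>i. 0)(i := 0) = (\<lambda>i::'a. 0::real)" by auto
    thus ?thesis using p0[OF that, of 0] by simp
  qed
  show "nash_eq I dmax eps xi l theta (\<lambda>i. 0) \<longleftrightarrow>
            (\<forall>i\<in>I. eps i \<ge> 1 / (xi i * l i + theta i * (\<Sum>j\<in>I - {i}. (l j)\<^sup>2)))"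
    unfolding c_def[symmetric]
  proof
    assume N: "nash_eq I dmax eps xi l theta (\<lambda>i. 0)"
    show "\<forall>i\<in>I. eps i \<ge> 1 / c i"
    proof (rule ccontr)
      assume "\<not> ?thesis"
      then obtain i where i: "i \<in> I" "eps i < 1 / c i" by auto
      define x where "x = min (dmax i) ((1 / c i - eps i) / 2)"
      have e: "eps i > 0" "c i > 0" "dmax i > 0" using assms(3,4) cpos i by auto
      have "x \<le> (1 / c i - eps i) / 2" unfolding x_def by (rule min.cobounded2)
      hence x0: "x > 0" "x \<le> dmax i" "x + eps i < 1 / c i" using e i unfolding x_def by auto
      have "c i * (x + eps i) < 1" using x0 e by (simp add: field_simps)
      hence "x * (c i * (x + eps i)) < x * 1" using x0 by (intro mult_strict_left_mono) auto
      hence "c i * x * (x + eps i) < x" by (simp add: algebra_simps)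
      hence lt: "c i * x < x / (x + eps i)" using x0 e by (simp add: less_divide_eq)
      have "ln (x + eps i) \<ge> ln (eps i) + (x + eps i - eps i) / (x + eps i)"
        using x0 e by (intro ln_lo) auto
      hence "ln (x + eps i) - c i * x > ln (eps i)" using lt by simp
      moreover have "ln (eps i) \<ge> ln (x + eps i) - c i * x"
        using N i x0 unfolding nash_eq_def by (metis p0 p00 less_imp_le)
      ultimately show False by simp
    qed
  next
    assume H: "\<forall>i\<in>I. eps i \<ge> 1 / c i"
    show "nash_eq I dmax eps xi l theta (\<lambda>i. 0)"
      unfolding nash_eq_def
    proof (intro conjI ballI allI impI)
      fix i assume i: "i \<in> I"
      show "0 \<le> (0::real)" by simp
      show "0 \<le> dmax i" using assms(3)[OF i] by simp
      fix x :: real assume x: "0 \<le> x \<and> x \<le> dmax i"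
      have e: "eps i > 0" "c i > 0" using assms(4) cpos i by auto
      have "1 / c i \<le> eps i" using H i by auto
      hence "eps i * c i \<ge> 1" using e by (simp add: divide_le_eq mult.commute)
      hence "x * 1 \<le> x * (eps i * c i)" using x by (intro mult_left_mono) auto
      hence "x / eps i \<le> c i * x" using e by (simp add: divide_le_eq algebra_simps)
      moreover have "ln (x + eps i) \<le> ln (eps i) + (x + eps i - eps i) / eps i"
        using x e by (intro ln_up) auto
      ultimately show "payoff I dmax eps xi l theta ((\<lambda>i. 0)(i := x)) i
                       \<le> payoff I dmax eps xi l theta (\<lambda>i. 0) i"
        using p0[OF i] p00[OF i] by simp
    qed
  qed
next
  define D where "D = (\<Sum>j\<in>I. dmax j)"
  have pm: "payoff I dmax eps xi l theta (dmax(i := x)) i = ln (D - dmax i + x + eps i) - xi i * l i * x"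
    if "i \<in> I" for i x using paymax[OF assms(1) that assms(3)] unfolding D_def by simp
  have pmm: "payoff I dmax eps xi l theta dmax i = ln (D + eps i) - xi i * l i * dmax i"
    if "i \<in> I" for i using pm[OF that, of "dmax i"] by simp
  have Dge: "D - dmax i \<ge> 0" if "i \<in> I" for i
  proof -
    have "D - dmax i = (\<Sum>j\<in>I - {i}. dmax j)" unfolding D_def
      using assms(1) that by (simp add: sum_diff1)
    also have "\<dots> \<ge> 0" using assms(3) by (intro sum_nonneg) (auto intro: less_imp_le)
    finally show ?thesis .
  qed
  show "nash_eq I dmax eps xi l theta dmax \<longleftrightarrow>
            (\<forall>i\<in>I. eps i \<le> 1 / (xi i * l i) - (\<Sum>j\<in>I. dmax j))"
    unfolding D_def[symmetric]
  proof
    assume N: "nash_eq I dmax eps xi l theta dmax"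
    show "\<forall>i\<in>I. eps i \<le> 1 / (xi i * l i) - D"
    proof (rule ccontr)
      assume "\<not> ?thesis"
      then obtain i where i: "i \<in> I" "eps i > 1 / (xi i * l i) - D" by auto
      define a where "a = xi i * l i"
      define Y where "Y = D + eps i"
      have e: "eps i > 0" "a > 0" "dmax i > 0" "D - dmax i \<ge> 0"
        using assms(3,4,5,6) i Dge unfolding a_def by (auto)
      have Ya: "Y > 1 / a" using i unfolding Y_def a_def by simp
      define h where "h = min (dmax i) ((Y - 1 / a) / 2)"
      have "h \<le> (Y - 1 / a) / 2" unfolding h_def by (rule min.cobounded2)
      hence h: "h > 0" "h \<le> dmax i" "Y - h > 1 / a" using e Ya unfolding h_def by auto
      have "1 / a > 0" using e by simp
      hence Yh: "Y - h > 0" using h by linarith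
      have "a * (Y - h) > 1" using h e by (simp add: field_simps)
      hence "h * 1 < h * (a * (Y - h))" using h by (intro mult_strict_left_mono) auto
      hence "h < a * h * (Y - h)" by (simp add: algebra_simps)
      hence lt: "h / (Y - h) < a * h" using Yh by (simp add: divide_less_eq)
      have "ln (Y - h) \<ge> ln Y + (Y - h - Y) / (Y - h)"
        using Yh e unfolding Y_def by (intro ln_lo) auto
      hence "ln (Y - h) - a * (dmax i - h) > ln Y - a * dmax i"
        using lt by (simp add: algebra_simps)
      moreover have "ln Y - a * dmax i \<ge> ln (Y - h) - a * (dmax i - h)"
      proof -
        have "payoff I dmax eps xi l theta (dmax(i := dmax i - h)) i \<le> payoff I dmax eps xi l theta dmax i"
          using N i h unfolding nash_eq_def by auto
        thus ?thesis unfolding pm[OF i(1)] pmm[OF i(1)] Y_def a_def by (simp add: algebra_simps)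
      qed
      ultimately show False by simp
    qed
  next
    assume H: "\<forall>i\<in>I. eps i \<le> 1 / (xi i * l i) - D"
    show "nash_eq I dmax eps xi l theta dmax"
      unfolding nash_eq_def
    proof (intro conjI ballI allI impI)
      fix i assume i: "i \<in> I"
      show "0 \<le> dmax i" using assms(3)[OF i] by simp
      show "dmax i \<le> dmax i" by simp
      fix x :: real assume x: "0 \<le> x \<and> x \<le> dmax i"
      define a where "a = xi i * l i"
      define Y where "Y = D + eps i"
      have e: "eps i > 0" "a > 0" "D - dmax i \<ge> 0"
        using assms(4,5,6) i Dge unfolding a_def by auto
      have Yp: "Y > 0" using e x unfolding Y_def by linarith
      have "eps i \<le> 1 / (xi i * l i) - D" using H i by auto
      hence "Y \<le> 1 / a" unfolding Y_def a_def by linarith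
      hence aY: "a * Y \<le> 1" using e by (simp add: le_divide_eq mult.commute)
      have pos: "D - dmax i + x + eps i > 0" using e x by linarith
      have "ln (D - dmax i + x + eps i) \<le> ln Y + (D - dmax i + x + eps i - Y) / Y"
        using pos Yp by (intro ln_up) auto
      moreover have "(D - dmax i + x + eps i - Y) / Y \<le> a * (x - dmax i)"
      proof -
        have "D - dmax i + x + eps i - Y = x - dmax i" unfolding Y_def by simp
        moreover have "(x - dmax i) \<le> a * Y * (x - dmax i)"
        proof -
          have "(a * Y) * (x - dmax i) \<ge> 1 * (x - dmax i)"
            using aY x by (intro mult_right_mono_neg) auto
          thus ?thesis by simp
        qed
        ultimately show ?thesis using Yp by (simp add: field_simps)
      qed
      ultimately show "payoff I dmax eps xi l theta (dmax(i := x)) i \<le> payoff I dmax eps xi l theta dmax i"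
        unfolding pm[OF i] pmm[OF i] Y_def[symmetric] a_def[symmetric] by (simp add: algebra_simps)
    qed
  qed
qed

end
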